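(* Let $\mathbb X$ and $\mathbb Y$ be Banach spaces, $C\subseteq\mathbb X$ and $F:C\to\mathbb Y$ a continuous function, continuously differentiable on $\mathrm{int}(C)$. Take $x_0\in\mathrm{int}(C)$ with $F'(x_0)$ non-singular. Suppose there exist constants $L>0$ and $b>0$ such that $bL<1/2$, $B(x_0,1/L)\subset C$, \[\|F'(x_0)^{-1}[F'(y)-F'(x)]\|\le L\|x-y\|\quad\text{for all }x,y\in B(x_0,1/L),\] \[\|F'(x_0)^{-1}F(x_0)\|\le b,\qquad 0\le\theta\le\frac{1-\sqrt{2bL}}{1+\sqrt{2bL}}.\] Then the inexact Newton method with starting point $x_0$ and relative residual error tolerance $\theta$: for $k=0,1,\dots$, $x_{k+1}=x_k+S_k$ with $\|F'(x_0)^{-1}[F(x_k)+F'(x_k)S_k]\|\le\theta\|F'(x_0)^{-1}F(x_k)\|$, is well defined; any generated sequence satisfies $\|F'(x_0)^{-1}F(x_k)\|\le(\frac{1+\theta^2}{2})^kb$ for $k=0,1,\dots$, is contained in $B(x_0,\lambda)$, and converges to a point $x_*\in B[x_0,t_*]$ which is the unique zero of $F$ in $B(x_0,1/L)$, where $\lambda:=\sqrt{2bL}/L$ and $t_*:=(1-\sqrt{1-2Lb})/L$. Moreover, for $k=0,1,\dots$, \[\|x_*-x_{k+1}\|\le\Big[\frac{1+\theta}{2}\frac{L}{1-\sqrt{2bL}}\|x_*-x_k\|+\theta\,\frac{1+\sqrt{2bL}}{1-\sqrt{2bL}}\Big]\|x_*-x_k\|,\] and if additionally $0\le\theta<(1-\sqrt{2bL})/(5-\sqrt{2bL})$,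 then \[\|x_*-x_{k+1}\|\le\Big[\frac{1+\theta}{2}+\frac{2\theta}{1-\sqrt{2bL}}\Big]\|x_*-x_k\|,\qquad k=0,1,\dots.\]
   Context: $B(x,r)$, $B[x,r]$ denote open/closed balls of center $x$ and radius $r$. *)

theory Defs
  imports "HOL-Analysis.Analysis"
begin

definition nonsingular :: "('a::real_normed_vector \<Rightarrow>\<^sub>L 'b::real_normed_vector) \<Rightarrow> bool" where
  "nonsingular T \<longleftrightarrow> (\<exists>G. G o\<^sub>L T = id_blinfun \<and> T o\<^sub>L G = id_blinfun)"

definition blinfun_inv :: "('a::real_normed_vector \<Rightarrow>\<^sub>L 'b::real_normed_vector) \<Rightarrow> ('b \<Rightarrow>\<^sub>L 'a)" where
  "blinfun_inv T = (SOME G. G o\<^sub>L T = id_blinfun \<and> T o\<^sub>L G = id_blinfun)"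

end

theory Submission
  imports Defs
begin


lemma step_arith:
  fixes a \<theta> U v \<delta> :: real
  assumes U0: "0 \<le> U" and Ua: "U < a" and a1: "a < 1" and th0: "0 \<le> \<theta>"
    and tha: "(1 + \<theta>) * a \<le> 1 - \<theta>" and v0: "0 \<le> v" and vU: "2 * v \<le> (a - U)\<^sup>2"
    and d0: "0 \<le> \<delta>" and dU: "(1 - U) * \<delta> \<le> (1 + \<theta>) * v"
  shows "\<delta> \<le> (1 + \<theta>) * a * (a - U) / 2" "(a - U) * \<delta> \<le> a * (1 + \<theta>) * v" "U + \<delta> < a"
proof -
  define m where "m = 1 - U"
  define w where "w = a - U"
  have m0: "m > 0" using Ua a1 by (simp add: m_def)
  have w0: "w > 0" using Ua by (simp add: w_def)
  have "U * a \<le> U * 1" by (rule mult_left_mono) (use a1 U0 in auto)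
  then have wam: "w \<le> a * m" unfolding w_def m_def by (simp add: algebra_simps)
  have a0: "a > 0" using U0 Ua by simp
  have vw: "v \<le> w * w / 2" using vU unfolding w_def power2_eq_square by simp
  have "m * \<delta> \<le> (1 + \<theta>) * v" using dU unfolding m_def .
  also have "\<dots> \<le> (1 + \<theta>) * (w * w / 2)" by (rule mult_left_mono[OF vw]) (use th0 in simp)
  also have "\<dots> \<le> (1 + \<theta>) * (w * (a * m) / 2)"
    using wam w0 th0 by (intro mult_left_mono) (auto intro: mult_left_mono)
  finally have "m * \<delta> \<le> m * ((1 + \<theta>) * a * w / 2)" by (simp add: algebra_simps)
  then show d1: "\<delta> \<le> (1 + \<theta>) * a * (a - U) / 2" using m0 unfolding w_def by simp
  have "m * (w * \<delta>) \<le> w * ((1 + \<theta>) * v)" using dU w0 unfolding m_def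
    by (metis mult.left_commute mult_le_cancel_left_pos)
  also have "\<dots> \<le> (a * m) * ((1 + \<theta>) * v)" using wam th0 v0 by (intro mult_right_mono) auto
  finally have "m * (w * \<delta>) \<le> m * (a * (1 + \<theta>) * v)" by (simp add: algebra_simps)
  then show "(a - U) * \<delta> \<le> a * (1 + \<theta>) * v" using m0 unfolding w_def by simp
  have "(1 + \<theta>) * a \<le> 1" using tha th0 by linarith
  then have "(1 + \<theta>) * a * w \<le> 1 * w" by (rule mult_right_mono) (use w0 in simp)
  then have "(1 + \<theta>) * a * (a - U) / 2 < a - U"
    using w0 unfolding w_def by (metis (no_types) half_gt_zero less_add_same_cancel2 linorder_not_le order_trans mult_1 field_sum_of_halves)
  then show "U + \<delta> < a" using d1 by simp
qed

lemma step_arith2: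
  fixes a \<theta> U v \<delta> v' :: real
  assumes U0: "0 \<le> U" and Ua: "U < a" and a1: "a < 1" and th0: "0 \<le> \<theta>"
    and tha: "(1 + \<theta>) * a \<le> 1 - \<theta>" and v0: "0 \<le> v" and vU: "2 * v \<le> (a - U)\<^sup>2"
    and d0: "0 \<le> \<delta>" and dU: "(1 - U) * \<delta> \<le> (1 + \<theta>) * v"
    and v'0: "0 \<le> v'" and v': "v' \<le> \<theta> * v + \<delta>\<^sup>2 / 2"
  shows "2 * v' \<le> (a - (U + \<delta>))\<^sup>2" "v' \<le> (1 + \<theta>\<^sup>2) / 2 * v"
proof -
  note s = step_arith[OF assms(1-9)]
  have a0: "a > 0" using U0 Ua by simp
  have k: "\<theta> + (1 + \<theta>) * a \<le> 1" using tha by linarith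
  have "2 * \<theta> * v + 2 * ((a - U) * \<delta>) \<le> 2 * \<theta> * v + 2 * (a * (1 + \<theta>) * v)"
    using s(2) by linarith
  also have "\<dots> = 2 * v * (\<theta> + (1 + \<theta>) * a)" by (simp add: algebra_simps)
  also have "\<dots> \<le> 2 * v" using mult_left_le[OF k v0] by simp
  also have "\<dots> \<le> (a - U)\<^sup>2" by (rule vU)
  finally have "2 * \<theta> * v + 2 * ((a - U) * \<delta>) \<le> (a - U)\<^sup>2" .
  then show "2 * v' \<le> (a - (U + \<delta>))\<^sup>2" using v' by (simp add: power2_eq_square algebra_simps)
  have "\<delta> * \<delta> \<le> ((1 + \<theta>) * a * (a - U) / 2) * \<delta>" using s(1) d0 by (rule mult_right_mono)
  also have "\<dots> = (1 + \<theta>) * a / 2 * ((a - U) * \<delta>)" by (simp add: algebra_simps)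
  also have "\<dots> \<le> (1 + \<theta>) * a / 2 * (a * (1 + \<theta>) * v)"
    using s(2) th0 a0 by (intro mult_left_mono) auto
  also have "\<dots> = ((1 + \<theta>) * a)\<^sup>2 * v / 2" by (simp add: power2_eq_square algebra_simps)
  also have "\<dots> \<le> (1 - \<theta>)\<^sup>2 * v / 2"
    using tha th0 a0 v0 by (intro divide_right_mono mult_right_mono power_mono) auto
  finally have "\<delta>\<^sup>2 \<le> (1 - \<theta>)\<^sup>2 * v / 2" by (simp add: power2_eq_square)
  then have "v' \<le> \<theta> * v + (1 - \<theta>)\<^sup>2 * v / 4" using v' by linarith
  also have "\<dots> \<le> (1 + \<theta>\<^sup>2) / 2 * v"
  proof -
    have "(1 + \<theta>\<^sup>2) / 2 * v - (\<theta> * v + (1 - \<theta>)\<^sup>2 * v / 4) = (1 - \<theta>)\<^sup>2 * v / 4"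
      by (simp add: power2_eq_square field_simps)
    moreover have "0 \<le> (1 - \<theta>)\<^sup>2 * v / 4" using v0 by simp
    ultimately show ?thesis by linarith
  qed
  finally show "v' \<le> (1 + \<theta>\<^sup>2) / 2 * v" .
qed


lemma rate_arith:
  fixes L a U ud e e' \<theta> r :: real
  assumes L: "0 < L" and U0: "0 \<le> U" and Ua: "U < a" and a1: "a < 1" and ud0: "0 \<le> ud" and udU: "ud \<le> U"
    and e0: "0 \<le> e" and eU: "L * e \<le> a - U" and th0: "0 \<le> \<theta>" and r0: "0 \<le> r" and re: "r \<le> (1 + a) * e"
    and e'0: "0 \<le> e'" and key: "(1 - ud) * e' \<le> L / 2 * e\<^sup>2 + \<theta> * r"
  shows "e' \<le> ((1 + \<theta>) / 2 * (L / (1 - a)) * e + \<theta> * (1 + a) / (1 - a)) * e"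
    and "e' \<le> ((1 + \<theta>) / 2 + 2 * \<theta> / (1 - a)) * e"
proof -
  have ma: "0 < 1 - a" using a1 by simp
  have mud: "1 - a \<le> 1 - ud" using udU Ua by simp
  have mudp: "0 < 1 - ud" using ma mud by linarith
  have tr: "\<theta> * r \<le> \<theta> * ((1 + a) * e)" using re th0 by (rule mult_left_mono)
  have P0: "0 \<le> L / 2 * e\<^sup>2 + \<theta> * r" using L th0 r0 by simp
  have "(1 - a) * e' \<le> (1 - ud) * e'" using mud e'0 by (rule mult_right_mono)
  also have "\<dots> \<le> L / 2 * e\<^sup>2 + \<theta> * ((1 + a) * e)" using key tr by linarith
  also have "\<dots> \<le> (1 + \<theta>) / 2 * L * e\<^sup>2 + \<theta> * ((1 + a) * e)"
  proof -
    have "L / 2 * e\<^sup>2 \<le> (1 + \<theta>) / 2 * L * e\<^sup>2"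
      using th0 L by (simp add: mult_right_mono mult_left_mono field_simps)
    then show ?thesis by linarith
  qed
  finally have "(1 - a) * e' \<le> (1 + \<theta>) / 2 * L * e\<^sup>2 + \<theta> * ((1 + a) * e)" .
  then have "e' \<le> ((1 + \<theta>) / 2 * L * e\<^sup>2 + \<theta> * ((1 + a) * e)) / (1 - a)"
    using ma by (simp add: field_simps)
  also have "\<dots> = ((1 + \<theta>) / 2 * (L / (1 - a)) * e + \<theta> * (1 + a) / (1 - a)) * e"
    using ma by (simp add: power2_eq_square add_divide_distrib algebra_simps)
  finally show "e' \<le> ((1 + \<theta>) / 2 * (L / (1 - a)) * e + \<theta> * (1 + a) / (1 - a)) * e" .
  have Le: "L * e \<le> 1 - ud" using eU udU a1 by linarith
  have "L / 2 * e\<^sup>2 = (L * e) * e / 2" by (simp add: power2_eq_square)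
  also have "\<dots> \<le> (1 - ud) * e / 2" using Le e0 by (simp add: mult_right_mono)
  finally have "(1 - ud) * e' \<le> (1 - ud) * e / 2 + \<theta> * ((1 + a) * e)" using key tr by linarith
  also have "\<theta> * ((1 + a) * e) \<le> \<theta> * (2 * e)" using a1 e0 th0 by (intro mult_left_mono mult_right_mono) auto
  also have "\<theta> * (2 * e) = (1 - a) * (2 * \<theta> / (1 - a) * e)" using ma by simp
  also have "\<dots> \<le> (1 - ud) * (2 * \<theta> / (1 - a) * e)" using mud th0 e0 ma
    by (intro mult_right_mono) auto
  finally have "(1 - ud) * e' \<le> (1 - ud) * (e / 2 + 2 * \<theta> / (1 - a) * e)" by (simp add: algebra_simps)
  then have "e' \<le> e / 2 + 2 * \<theta> / (1 - a) * e" using mudp by simp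
  also have "\<dots> \<le> ((1 + \<theta>) / 2 + 2 * \<theta> / (1 - a)) * e" using th0 e0 by (simp add: algebra_simps)
  finally show "e' \<le> ((1 + \<theta>) / 2 + 2 * \<theta> / (1 - a)) * e" .
qed

lemma zero_arith:
  fixes s Lb :: real
  assumes s0: "0 \<le> s" and s1: "s < 1" and Lb: "2 * Lb < 1" and k: "s \<le> Lb + s\<^sup>2 / 2"
  shows "s \<le> 1 - sqrt (1 - 2 * Lb)"
proof -
  have "1 - 2 * Lb \<le> (1 - s)\<^sup>2" using k by (simp add: power2_eq_square algebra_simps)
  then have "sqrt (1 - 2 * Lb) \<le> sqrt ((1 - s)\<^sup>2)" by (rule real_sqrt_le_mono)
  also have "\<dots> = 1 - s" using s1 by simp
  finally show ?thesis by simp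
qed




lemma path_bound:
  fixes x :: "nat \<Rightarrow> 'a::real_normed_vector"
  assumes "m \<le> n"
  shows "norm (x n - x m) \<le> (\<Sum>j\<in>{m..<n}. norm (x (Suc j) - x j))"
  using assms
proof (induction n)
  case 0 then show ?case by simp
next
  case (Suc n)
  show ?case
  proof (cases "m = Suc n")
    case True then show ?thesis by simp
  next
    case False
    then have mn: "m \<le> n" using Suc.prems by simp
    have "norm (x (Suc n) - x m) \<le> norm (x (Suc n) - x n) + norm (x n - x m)"
      using norm_triangle_ineq[of "x (Suc n) - x n" "x n - x m"] by simp
    also have "\<dots> \<le> norm (x (Suc n) - x n) + (\<Sum>j\<in>{m..<n}. norm (x (Suc j) - x j))"
      using Suc.IH[OF mn] by simp
    also have "\<dots> = (\<Sum>j\<in>{m..<Suc n}. norm (x (Suc j) - x j))"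
      using mn by (simp add: sum.atLeastLessThan_Suc)
    finally show ?thesis .
  qed
qed

locale nk =
  fixes F :: "'a::banach \<Rightarrow> 'b::banach" and F' :: "'a \<Rightarrow> ('a \<Rightarrow>\<^sub>L 'b)"
    and G :: "'b \<Rightarrow>\<^sub>L 'a" and x0 :: 'a and L :: real
  assumes Lpos: "L > 0"
  and der: "\<And>x. x \<in> ball x0 (1/L) \<Longrightarrow> (F has_derivative blinfun_apply (F' x)) (at x)"
  and lip: "\<And>x y. x \<in> ball x0 (1/L) \<Longrightarrow> y \<in> ball x0 (1/L) \<Longrightarrow>
               norm (G o\<^sub>L (F' y - F' x)) \<le> L * norm (x - y)"
  and inv1: "G o\<^sub>L F' x0 = id_blinfun"
begin

lemma Ginv1: "G (F' x0 v) = v"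
  using arg_cong[OF inv1, of "\<lambda>T. blinfun_apply T v"] by simp

lemma H_der: "x \<in> ball x0 (1/L) \<Longrightarrow> ((\<lambda>z. G (F z)) has_derivative (\<lambda>v. G (F' x v))) (at x)"
  using bounded_linear.has_derivative[OF blinfun.bounded_linear_right der] by blast

lemma Ediff: "(G o\<^sub>L (F' y - F' x)) v = G (F' y v) - G (F' x v)"
  by (simp add: blinfun.diff_left blinfun.diff_right)

lemma lowerb:
  assumes x: "x \<in> ball x0 (1/L)"
  shows "(1 - L * norm (x - x0)) * norm v \<le> norm (G (F' x v))"
proof -
  have x0b: "x0 \<in> ball x0 (1/L)" using Lpos by simp
  have e: "G (F' x v) = v - (G o\<^sub>L (F' x0 - F' x)) v" unfolding Ediff Ginv1 by simp
  have "norm ((G o\<^sub>L (F' x0 - F' x)) v) \<le> norm (G o\<^sub>L (F' x0 - F' x)) * norm v"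
    by (rule norm_blinfun)
  also have "\<dots> \<le> L * norm (x - x0) * norm v"
    by (rule mult_right_mono[OF lip[OF x x0b]]) simp
  finally have "norm ((G o\<^sub>L (F' x0 - F' x)) v) \<le> L * norm (x - x0) * norm v" .
  moreover have "norm v - norm ((G o\<^sub>L (F' x0 - F' x)) v) \<le> norm (G (F' x v))"
    unfolding e by (rule norm_triangle_ineq2)
  ultimately show ?thesis by (simp add: algebra_simps)
qed

lemma surj:
  assumes x: "x \<in> ball x0 (1/L)"
  shows "\<exists>S. G (F' x S) = w"
proof -
  have x0b: "x0 \<in> ball x0 (1/L)" using Lpos by simp
  let ?E = "G o\<^sub>L (F' x0 - F' x)"
  define c where "c = L * norm (x - x0)"
  have c0: "0 \<le> c" using Lpos by (simp add: c_def)
  have c1: "c < 1" using x Lpos by (simp add: c_def dist_norm norm_minus_commute field_simps)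
  have nE: "norm ?E \<le> c" using lip[OF x x0b] by (simp add: c_def)
  have "\<exists>!v. w + ?E v = v"
  proof (rule banach_fix_type[OF c0 c1], intro allI)
    fix u v
    have "dist (w + ?E u) (w + ?E v) = norm (?E (u - v))"
      by (simp add: dist_norm blinfun.diff_right)
    also have "\<dots> \<le> norm ?E * norm (u - v)" by (rule norm_blinfun)
    also have "\<dots> \<le> c * dist u v" by (simp add: dist_norm mult_right_mono nE)
    finally show "dist (w + ?E u) (w + ?E v) \<le> c * dist u v" .
  qed
  then obtain v where v: "w + ?E v = v" by blast
  have "G (F' x v) = v - ?E v" unfolding Ediff Ginv1 by simp
  also have "\<dots> = w" using v by (metis add_diff_cancel_right')
  finally show ?thesis by blast
qed

lemma seg_in_ball:
  assumes x: "x \<in> ball x0 (1/L)" and y: "y \<in> ball x0 (1/L)" and t: "0 \<le> t" "t \<le> 1"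
  shows "x + t *\<^sub>R (y - x) \<in> ball x0 (1/L)"
proof -
  have "x + t *\<^sub>R (y - x) = (1 - t) *\<^sub>R x + t *\<^sub>R y" by (simp add: algebra_simps)
  moreover have "(1 - t) *\<^sub>R x + t *\<^sub>R y \<in> ball x0 (1/L)"
    by (rule convexD[OF convex_ball x y]) (use t in auto)
  ultimately show ?thesis by simp
qed

lemma taylor:
  assumes x: "x \<in> ball x0 (1/L)" and y: "y \<in> ball x0 (1/L)"
  shows "norm (G (F y) - G (F x) - G (F' x (y - x))) \<le> L / 2 * (norm (y - x))\<^sup>2"
proof -
  let ?p = "\<lambda>t. x + t *\<^sub>R (y - x)"
  define f where "f = (\<lambda>t::real. G (F (?p t)) - t *\<^sub>R G (F' x (y - x)))"
  define f' where "f' = (\<lambda>t::real. G (F' (?p t) (y - x)) - G (F' x (y - x)))"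
  define \<phi> where "\<phi> = (\<lambda>t::real. L / 2 * t\<^sup>2 * (norm (y - x))\<^sup>2)"
  have pin: "?p t \<in> ball x0 (1/L)" if "t \<in> {0..1}" for t using seg_in_ball[OF x y] that by auto
  have fd: "(f has_vector_derivative f' t) (at t)" if "t \<in> {0..1}" for t
  proof -
    have "((\<lambda>t. G (F (?p t))) has_derivative (\<lambda>v. G (F' (?p t) (0 + v *\<^sub>R (y - x))))) (at t)"
    proof -
      have "(?p has_derivative (\<lambda>v. 0 + v *\<^sub>R (y - x))) (at t)"
        by (auto intro!: derivative_eq_intros)
      from has_derivative_compose[OF this H_der[OF pin[OF that]]] show ?thesis by simp
    qed
    then have "((\<lambda>t. G (F (?p t))) has_derivative (\<lambda>v. v *\<^sub>R G (F' (?p t) (y - x)))) (at t)"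
      by (simp add: blinfun.scaleR_right)
    then have "((\<lambda>t. G (F (?p t))) has_vector_derivative G (F' (?p t) (y - x))) (at t)"
      by (simp add: has_vector_derivative_def)
    then show ?thesis unfolding f_def f'_def
      by (auto intro!: derivative_eq_intros)
  qed
  have fc: "continuous_on {0..1} f"
    using fd by (meson continuous_at_imp_continuous_on has_vector_derivative_continuous)
  have \<phi>d: "(\<phi> has_vector_derivative (L * t * (norm (y - x))\<^sup>2)) (at t)" for t
    unfolding \<phi>_def has_vector_derivative_def
    by (auto intro!: derivative_eq_intros simp: algebra_simps)
  have \<phi>c: "continuous_on {0..1} \<phi>" unfolding \<phi>_def by (intro continuous_intros)
  have bnd: "norm (f' t) \<le> L * t * (norm (y - x))\<^sup>2" if "0 < t" "t < 1" for t
  proof -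
    have "f' t = (G o\<^sub>L (F' (?p t) - F' x)) (y - x)" unfolding f'_def Ediff ..
    also have "norm \<dots> \<le> norm (G o\<^sub>L (F' (?p t) - F' x)) * norm (y - x)" by (rule norm_blinfun)
    also have "\<dots> \<le> L * norm (x - ?p t) * norm (y - x)"
      by (rule mult_right_mono[OF lip[OF x pin]]) (use that in auto)
    also have "norm (x - ?p t) = t * norm (y - x)" using that by simp
    finally show ?thesis by (simp add: power2_eq_square mult.assoc)
  qed
  have "norm (f 1 - f 0) \<le> \<phi> 1 - \<phi> 0"
    by (rule differentiable_bound_general[OF zero_less_one fc \<phi>c fd \<phi>d bnd]) auto
  thus ?thesis unfolding f_def \<phi>_def by (simp add: algebra_simps)
qed

lemma mvt:
  assumes S: "convex S" "S \<subseteq> ball x0 (1/L)" and B: "\<And>z. z \<in> S \<Longrightarrow> L * norm (z - x0) \<le> B"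
    and x: "x \<in> S" and y: "y \<in> S"
  shows "norm ((G (F x) - x) - (G (F y) - y)) \<le> B * norm (x - y)"
proof -
  have x0b: "x0 \<in> ball x0 (1/L)" using Lpos by simp
  have d: "((\<lambda>z. G (F z) - z) has_derivative blinfun_apply (G o\<^sub>L (F' z - F' x0))) (at z within S)"
    if "z \<in> S" for z
  proof -
    have "((\<lambda>z. G (F z) - z) has_derivative (\<lambda>v. G (F' z v) - v)) (at z)"
    proof -
      have "z \<in> ball x0 (1/L)" using that S by auto
      from has_derivative_diff[OF H_der[OF this] has_derivative_ident] show ?thesis .
    qed
    moreover have "(\<lambda>v. G (F' z v) - v) = blinfun_apply (G o\<^sub>L (F' z - F' x0))"
      by (rule ext, unfold Ediff Ginv1) simp
    ultimately show ?thesis by (metis has_derivative_at_withinI)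
  qed
  have o: "onorm (blinfun_apply (G o\<^sub>L (F' z - F' x0))) \<le> B" if "z \<in> S" for z
  proof -
    have "onorm (blinfun_apply (G o\<^sub>L (F' z - F' x0))) = norm (G o\<^sub>L (F' z - F' x0))"
      by (simp add: norm_blinfun.rep_eq)
    also have "\<dots> \<le> L * norm (x0 - z)" using lip[OF x0b] that S by auto
    also have "\<dots> \<le> B" using B[OF that] by (simp add: norm_minus_commute)
    finally show ?thesis .
  qed
  show ?thesis by (rule differentiable_bound[OF S(1) d o x y])
qed

end

locale nk2 = nk +
  fixes a b \<theta> :: real
  assumes a0: "0 < a" and a1: "a < 1" and ab: "a\<^sup>2 = 2 * b * L"
    and th0: "0 \<le> \<theta>" and tha: "(1 + \<theta>) * a \<le> 1 - \<theta>" and Fx0: "norm (G (F x0)) \<le> b"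
begin

definition "Up x n = L * (\<Sum>j<n. norm (x (Suc j) - x j))"

lemma Up_mono: "m \<le> n \<Longrightarrow> Up x m \<le> Up x n"
  unfolding Up_def using Lpos by (intro mult_left_mono sum_mono2) auto

lemma Up0: "0 \<le> Up x n" unfolding Up_def using Lpos by (simp add: sum_nonneg)

lemma dist_Up: "x 0 = x0 \<Longrightarrow> L * norm (x n - x0) \<le> Up x n"
  using path_bound[of 0 n x] Lpos unfolding Up_def by (simp add: atLeast0LessThan)

lemma in_ball: "x 0 = x0 \<Longrightarrow> Up x n < a \<Longrightarrow> x n \<in> ball x0 (a / L)"
  using dist_Up[of x n] Lpos by (simp add: dist_norm norm_minus_commute field_simps)

lemma ball_sub: "ball x0 (a / L) \<subseteq> ball x0 (1/L)"
  using a1 Lpos by (intro subset_ball) (simp add: divide_right_mono)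

lemma inv:
  assumes x0: "x 0 = x0"
    and res: "\<forall>k<n. norm (G (F (x k) + F' (x k) (x (Suc k) - x k))) \<le> \<theta> * norm (G (F (x k)))"
  shows "Up x n < a \<and> 2 * L * norm (G (F (x n))) \<le> (a - Up x n)\<^sup>2
          \<and> norm (G (F (x n))) \<le> ((1 + \<theta>\<^sup>2) / 2) ^ n * b"
  using res
proof (induction n)
  case 0
  have "2 * L * norm (G (F (x 0))) \<le> 2 * L * b" using Fx0 Lpos x0 by simp
  then show ?case using a0 ab Fx0 by (simp add: Up_def x0 mult.commute)
next
  case (Suc n)
  from Suc.prems have resn: "norm (G (F (x n) + F' (x n) (x (Suc n) - x n))) \<le> \<theta> * norm (G (F (x n)))"
    by simp
  from Suc.IH Suc.prems have IH: "Up x n < a" "2 * L * norm (G (F (x n))) \<le> (a - Up x n)\<^sup>2"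
      "norm (G (F (x n))) \<le> ((1 + \<theta>\<^sup>2) / 2) ^ n * b" by auto
  define S where "S = x (Suc n) - x n"
  define U where "U = Up x n"
  define r where "r = norm (G (F (x n)))"
  define r' where "r' = norm (G (F (x (Suc n))))"
  have xn: "x n \<in> ball x0 (1/L)" using in_ball[of x n, OF x0 IH(1)] ball_sub by auto
  have dn: "L * norm (x n - x0) \<le> U" using dist_Up[of x n, OF x0] by (simp add: U_def)
  have res2: "norm (G (F (x n)) + G (F' (x n) S)) \<le> \<theta> * r"
    using resn by (simp add: S_def r_def blinfun.add_right)
  have "(1 - L * norm (x n - x0)) * norm S \<le> norm (G (F' (x n) S))" by (rule lowerb[OF xn])
  also have "\<dots> \<le> norm (G (F (x n)) + G (F' (x n) S)) + r"
    unfolding r_def by (metis add_diff_cancel_left' norm_triangle_ineq4 add.commute)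
  also have "\<dots> \<le> (1 + \<theta>) * r" using res2 by (simp add: algebra_simps)
  finally have "(1 - L * norm (x n - x0)) * norm S \<le> (1 + \<theta>) * r" .
  moreover have "(1 - U) * norm S \<le> (1 - L * norm (x n - x0)) * norm S"
    using dn by (intro mult_right_mono) auto
  ultimately have "(1 - U) * norm S \<le> (1 + \<theta>) * r" by linarith
  then have dU: "(1 - U) * (L * norm S) \<le> (1 + \<theta>) * (L * r)"
    using Lpos by (metis (no_types, opaque_lifting) mult.left_commute mult_le_cancel_left_pos)
  have vU: "2 * (L * r) \<le> (a - U)\<^sup>2" using IH(2) by (simp add: U_def r_def mult.assoc)
  note sa = step_arith[OF Up0[of x n, folded U_def] IH(1)[folded U_def] a1 th0 tha _ vU _ dU]
  have Usuc: "Up x (Suc n) = U + L * norm S" by (simp add: Up_def U_def S_def algebra_simps)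
  have U1: "Up x (Suc n) < a" using sa(3) Lpos by (simp add: Usuc r_def)
  have xn1: "x (Suc n) \<in> ball x0 (1/L)" using in_ball[of x "Suc n", OF x0 U1] ball_sub by auto
  have "norm (G (F (x (Suc n))) - G (F (x n)) - G (F' (x n) S)) \<le> L / 2 * (norm S)\<^sup>2"
    using taylor[OF xn xn1] by (simp add: S_def)
  then have "r' \<le> norm (G (F (x n)) + G (F' (x n) S)) + L / 2 * (norm S)\<^sup>2"
    unfolding r'_def
    using norm_triangle_ineq[of "G (F (x (Suc n))) - G (F (x n)) - G (F' (x n) S)" "G (F (x n)) + G (F' (x n) S)"]
    by simp
  then have "r' \<le> \<theta> * r + L / 2 * (norm S)\<^sup>2" using res2 by linarith
  then have "L * r' \<le> L * (\<theta> * r + L / 2 * (norm S)\<^sup>2)"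
    using Lpos by (intro mult_left_mono) auto
  also have "\<dots> = \<theta> * (L * r) + (L * norm S)\<^sup>2 / 2" by (simp add: power2_eq_square algebra_simps)
  finally have "L * r' \<le> \<theta> * (L * r) + (L * norm S)\<^sup>2 / 2" .
  note sb = step_arith2[OF Up0[of x n, folded U_def] IH(1)[folded U_def] a1 th0 tha _ vU _ dU _ this]
  have r0: "0 \<le> r" by (simp add: r_def)
  have "2 * L * r' \<le> (a - Up x (Suc n))\<^sup>2" using sb(1) Lpos r0 by (simp add: Usuc r'_def mult.assoc)
  moreover have "r' \<le> ((1 + \<theta>\<^sup>2) / 2) ^ Suc n * b"
  proof -
    have "L * r' \<le> (1 + \<theta>\<^sup>2) / 2 * (L * r)" using sb(2) Lpos r0 by (simp add: r'_def)
    then have "r' \<le> (1 + \<theta>\<^sup>2) / 2 * r" using Lpos by (metis mult.left_commute mult_le_cancel_left_pos)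
    also have "\<dots> \<le> (1 + \<theta>\<^sup>2) / 2 * (((1 + \<theta>\<^sup>2) / 2) ^ n * b)"
      using IH(3) by (intro mult_left_mono) (auto simp: r_def)
    finally show ?thesis by simp
  qed
  ultimately show ?case using U1 by (simp add: r'_def)
qed


lemma Up_diff: "m \<le> n \<Longrightarrow> L * norm (x n - x m) \<le> Up x n - Up x m"
proof -
  assume mn: "m \<le> n"
  have "Up x n - Up x m = L * (\<Sum>j\<in>{m..<n}. norm (x (Suc j) - x j))"
    unfolding Up_def using sum.atLeastLessThan_concat[of 0 m n "\<lambda>j. norm (x (Suc j) - x j)"] mn
    by (simp add: atLeast0LessThan algebra_simps flip: distrib_left)
  then show ?thesis using path_bound[OF mn, of x] Lpos by simp
qed

lemma th_lt1: "\<theta> < 1" using tha a0 th0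
  by (smt (verit, best) mult_pos_pos)

lemma step_exists:
  assumes x0: "x 0 = x0"
    and res: "\<forall>k<n. norm (G (F (x k) + F' (x k) (x (Suc k) - x k))) \<le> \<theta> * norm (G (F (x k)))"
  shows "\<exists>S. norm (G (F (x n) + F' (x n) S)) \<le> \<theta> * norm (G (F (x n)))"
proof -
  have "Up x n < a" using inv[OF x0 res] by blast
  then have xn: "x n \<in> ball x0 (1/L)" using in_ball[of x n, OF x0] ball_sub by auto
  obtain S where "G (F' (x n) S) = - G (F (x n))" using surj[OF xn] by blast
  then have "G (F (x n) + F' (x n) S) = 0" by (simp add: blinfun.add_right)
  then have "norm (G (F (x n) + F' (x n) S)) \<le> \<theta> * norm (G (F (x n)))" using th0 by simp
  then show ?thesis by blast
qed

lemma conv: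
  assumes x0: "x 0 = x0"
    and res: "\<forall>k. norm (G (F (x k) + F' (x k) (x (Suc k) - x k))) \<le> \<theta> * norm (G (F (x k)))"
  obtains xs where "x \<longlonglongrightarrow> xs" "\<And>k. L * norm (xs - x k) \<le> a - Up x k" "G (F xs) = 0"
proof -
  have I: "Up x n < a" "2 * L * norm (G (F (x n))) \<le> (a - Up x n)\<^sup>2"
     "norm (G (F (x n))) \<le> ((1 + \<theta>\<^sup>2) / 2) ^ n * b" for n
    using inv[of x n, OF x0] res by auto
  have "incseq (Up x)" by (rule incseq_SucI) (rule Up_mono, simp)
  then obtain lu where "Up x \<longlonglongrightarrow> lu" using I(1) incseq_convergent[of "Up x" a]
    by (metis less_le)
  then have CU: "Cauchy (Up x)" by (rule LIMSEQ_imp_Cauchy)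
  have "Cauchy x"
  proof (rule CauchyI)
    fix e :: real assume e: "0 < e"
    obtain M where M: "\<forall>m\<ge>M. \<forall>n\<ge>M. norm (Up x m - Up x n) < e * L"
      using CauchyD[OF CU, of "e * L"] e Lpos by auto
    have "norm (x m - x n) < e" if "m \<ge> M" "n \<ge> M" for m n
    proof -
      have "L * norm (x m - x n) < e * L"
      proof (cases "m \<le> n")
        case True
        then have "L * norm (x n - x m) \<le> Up x n - Up x m" by (rule Up_diff)
        moreover have "norm (Up x n - Up x m) < e * L" using M that by auto
        ultimately show ?thesis by (simp add: norm_minus_commute)
      next
        case False
        then have "L * norm (x m - x n) \<le> Up x m - Up x n" by (intro Up_diff) simp
        moreover have "norm (Up x m - Up x n) < e * L" using M that by auto
        ultimately show ?thesis by simp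
      qed
      then show ?thesis using Lpos by (simp add: mult.commute)
    qed
    then show "\<exists>M. \<forall>m\<ge>M. \<forall>n\<ge>M. norm (x m - x n) < e" by blast
  qed
  then obtain xs where lim: "x \<longlonglongrightarrow> xs" using Cauchy_convergent_iff convergent_def by blast
  have tail: "L * norm (xs - x k) \<le> a - Up x k" for k
  proof -
    have "(\<lambda>n. L * norm (x n - x k)) \<longlonglongrightarrow> L * norm (xs - x k)"
      by (intro tendsto_intros lim)
    moreover have "\<forall>n\<ge>k. L * norm (x n - x k) \<le> a - Up x k"
      using Up_diff I(1) by (smt (verit))
    ultimately show ?thesis by (rule Lim_bounded)
  qed
  have xsb: "xs \<in> ball x0 (1/L)"
  proof -
    have "L * norm (xs - x0) \<le> a" using tail[of 0] x0 by (simp add: Up_def)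
    then have "norm (xs - x0) < 1 / L" using a1 Lpos by (simp add: field_simps)
    then show ?thesis by (simp add: dist_norm norm_minus_commute)
  qed
  have "isCont (\<lambda>z. G (F z)) xs"
    using has_derivative_continuous[OF H_der[OF xsb]] by (simp add: continuous_at)
  then have l1: "(\<lambda>n. G (F (x n))) \<longlonglongrightarrow> G (F xs)" using isCont_tendsto_compose lim by blast
  have tt: "\<theta> * \<theta> \<le> \<theta>" using th0 th_lt1 by (simp add: mult_left_le_one_le)
  have "0 \<le> (1 + \<theta>\<^sup>2) / 2" by simp
  then have qe: "norm ((1 + \<theta>\<^sup>2) / 2) = (1 + \<theta> * \<theta>) / 2" by (simp add: power2_eq_square)
  have "(1 + \<theta> * \<theta>) / 2 < 1" using th_lt1 tt by (simp only: field_simps)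
  then have q: "norm ((1 + \<theta>\<^sup>2) / 2) < 1" by (simp only: qe)
  have "(\<lambda>n. ((1 + \<theta>\<^sup>2) / 2) ^ n * b) \<longlonglongrightarrow> 0"
    using tendsto_mult[OF LIMSEQ_power_zero[OF q] tendsto_const[of b]] by simp
  moreover have "\<forall>n. norm (G (F (x n))) \<le> ((1 + \<theta>\<^sup>2) / 2) ^ n * b" using I(3) by blast
  ultimately have l2: "(\<lambda>n. G (F (x n))) \<longlonglongrightarrow> 0"
    by (intro Lim_null_comparison[OF always_eventually, of "\<lambda>n. G (F (x n))" "\<lambda>n. ((1 + \<theta>\<^sup>2) / 2) ^ n * b"])
  have "G (F xs) = 0" using LIMSEQ_unique[OF l1 l2] .
  then show ?thesis using that lim tail by blast
qed


lemma aL: "2 * L * b < 1"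
proof -
  have "a * a < 1 * 1" by (rule mult_strict_mono) (use a0 a1 in auto)
  then show ?thesis using ab by (simp add: power2_eq_square mult.commute mult.left_commute)
qed

lemma zero_loc:
  assumes y: "y \<in> ball x0 (1/L)" and Gy: "G (F y) = 0"
  shows "L * norm (y - x0) \<le> 1 - sqrt (1 - 2 * L * b)"
proof -
  have x0b: "x0 \<in> ball x0 (1/L)" using Lpos by simp
  have "norm (G (F y) - G (F x0) - G (F' x0 (y - x0))) \<le> L / 2 * (norm (y - x0))\<^sup>2"
    by (rule taylor[OF x0b y])
  then have t: "norm (- G (F x0) - (y - x0)) \<le> L / 2 * (norm (y - x0))\<^sup>2" by (simp add: Gy Ginv1)
  have "norm (y - x0) \<le> norm (G (F x0)) + norm (- G (F x0) - (y - x0))"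
    using norm_triangle_ineq[of "G (F x0)" "- G (F x0) - (y - x0)"] by (simp add: norm_minus_commute)
  also have "\<dots> \<le> b + L / 2 * (norm (y - x0))\<^sup>2" using t Fx0 by linarith
  finally have k: "norm (y - x0) \<le> b + L / 2 * (norm (y - x0))\<^sup>2" .
  have "L * norm (y - x0) \<le> L * (b + L / 2 * (norm (y - x0))\<^sup>2)" using k Lpos by simp
  then have k2: "L * norm (y - x0) \<le> L * b + (L * norm (y - x0))\<^sup>2 / 2"
    by (simp add: power2_eq_square algebra_simps)
  have s1: "L * norm (y - x0) < 1" using y Lpos by (simp add: dist_norm norm_minus_commute field_simps)
  show ?thesis using zero_arith[OF _ s1 _ k2] aL Lpos by (simp add: mult.assoc)
qed

lemma unique:
  assumes y: "y \<in> ball x0 (1/L)" and Gy: "G (F y) = 0"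
    and z: "z \<in> ball x0 (1/L)" and Gz: "G (F z) = 0"
  shows "y = z"
proof -
  define c where "c = sqrt (1 - 2 * L * b)"
  have c0: "0 < c" using aL by (simp add: c_def)
  define S where "S = cball x0 ((1 - c) / L)"
  have "(1 - c) / L < 1 / L" using c0 Lpos by (simp add: divide_strict_right_mono)
  then have Sb: "S \<subseteq> ball x0 (1/L)" unfolding S_def
    by (metis mem_cball mem_ball order_le_less_trans subsetI)
  have B: "L * norm (w - x0) \<le> 1 - c" if "w \<in> S" for w
    using that Lpos unfolding S_def by (simp add: dist_norm norm_minus_commute field_simps)
  have yS: "y \<in> S" using zero_loc[OF y Gy] Lpos unfolding S_def c_def
    by (simp add: dist_norm norm_minus_commute field_simps)
  have zS: "z \<in> S" using zero_loc[OF z Gz] Lpos unfolding S_def c_def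
    by (simp add: dist_norm norm_minus_commute field_simps)
  have "norm ((G (F y) - y) - (G (F z) - z)) \<le> (1 - c) * norm (y - z)"
    by (rule mvt[OF _ Sb B yS zS]) (simp add: S_def)
  then have "norm (y - z) \<le> (1 - c) * norm (y - z)" using Gy Gz by (simp add: norm_minus_commute)
  then have "c * norm (y - z) \<le> 0" by (simp add: algebra_simps)
  then show ?thesis using c0 by (simp add: mult_le_0_iff)
qed

lemma rate:
  assumes x0: "x 0 = x0"
    and res: "\<forall>k. norm (G (F (x k) + F' (x k) (x (Suc k) - x k))) \<le> \<theta> * norm (G (F (x k)))"
    and tail: "\<And>k. L * norm (xs - x k) \<le> a - Up x k" and Gxs: "G (F xs) = 0"
  shows "norm (xs - x (Suc k)) \<le> ((1 + \<theta>) / 2 * (L / (1 - a)) * norm (xs - x k) + \<theta> * (1 + a) / (1 - a)) * norm (xs - x k)"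
    and "norm (xs - x (Suc k)) \<le> ((1 + \<theta>) / 2 + 2 * \<theta> / (1 - a)) * norm (xs - x k)"
proof -
  have I: "Up x n < a" for n using inv[of x n, OF x0] res by auto
  define e where "e = norm (xs - x k)"
  define e' where "e' = norm (xs - x (Suc k))"
  define r where "r = norm (G (F (x k)))"
  define S where "S = x (Suc k) - x k"
  let ?A = "\<lambda>v. G (F' (x k) v)"
  have xkb: "x k \<in> ball x0 (a / L)" using in_ball[of x k, OF x0 I] .
  have xk: "x k \<in> ball x0 (1/L)" using xkb ball_sub by auto
  have xscb: "xs \<in> cball x0 (a / L)"
    using tail[of 0] x0 Lpos by (simp add: Up_def dist_norm norm_minus_commute field_simps)
  have "a / L < 1 / L" using a1 Lpos by (simp add: divide_strict_right_mono)
  then have cb: "cball x0 (a / L) \<subseteq> ball x0 (1/L)"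
    by (metis mem_cball mem_ball order_le_less_trans subsetI)
  have xs: "xs \<in> ball x0 (1/L)" using xscb cb by auto
  have R: "norm (G (F xs) - G (F (x k)) - ?A (xs - x k)) \<le> L / 2 * e\<^sup>2"
    using taylor[OF xk xs] by (simp add: e_def)
  have rho: "norm (G (F (x k)) + ?A S) \<le> \<theta> * r"
    using res[rule_format, of k] by (simp add: S_def r_def blinfun.add_right)
  have id: "?A (x (Suc k) - xs) = (G (F xs) - G (F (x k)) - ?A (xs - x k)) + (G (F (x k)) + ?A S)"
    using Gxs by (simp add: S_def blinfun.diff_right blinfun.minus_right algebra_simps)
  have "norm (?A (x (Suc k) - xs)) \<le> L / 2 * e\<^sup>2 + \<theta> * r"
    unfolding id using R rho norm_triangle_ineq[of "G (F xs) - G (F (x k)) - ?A (xs - x k)" "G (F (x k)) + ?A S"]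
    by simp
  moreover have "(1 - L * norm (x k - x0)) * e' \<le> norm (?A (x (Suc k) - xs))"
    using lowerb[OF xk, of "x (Suc k) - xs"] by (simp add: e'_def norm_minus_commute)
  ultimately have key: "(1 - L * norm (x k - x0)) * e' \<le> L / 2 * e\<^sup>2 + \<theta> * r" by linarith
  have "norm ((G (F (x k)) - x k) - (G (F xs) - xs)) \<le> a * norm (x k - xs)"
  proof (rule mvt[OF convex_cball cb _ _ xscb])
    show "x k \<in> cball x0 (a / L)" using xkb by auto
    fix w assume "w \<in> cball x0 (a / L)"
    then show "L * norm (w - x0) \<le> a" using Lpos by (simp add: dist_norm norm_minus_commute field_simps)
  qed
  then have "norm (G (F (x k)) - (x k - xs)) \<le> a * e" using Gxs
    by (simp add: e_def norm_minus_commute algebra_simps)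
  then have re: "r \<le> (1 + a) * e"
    using norm_triangle_ineq[of "G (F (x k)) - (x k - xs)" "x k - xs"]
    by (simp add: r_def e_def norm_minus_commute algebra_simps)
  note ra = rate_arith[OF Lpos Up0 I a1 _ dist_Up[of x k, OF x0] _ tail[of k, folded e_def] th0 _ re _ key]
  show "norm (xs - x (Suc k)) \<le> ((1 + \<theta>) / 2 * (L / (1 - a)) * norm (xs - x k) + \<theta> * (1 + a) / (1 - a)) * norm (xs - x k)"
    using ra(1) Lpos by (simp add: e_def e'_def r_def)
  show "norm (xs - x (Suc k)) \<le> ((1 + \<theta>) / 2 + 2 * \<theta> / (1 - a)) * norm (xs - x k)"
    using ra(2) Lpos by (simp add: e_def e'_def r_def)
qed

end

theorem theorem6p3:
  fixes F :: "'a::banach \<Rightarrow> 'b::banach"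
    and F' :: "'a \<Rightarrow> ('a \<Rightarrow>\<^sub>L 'b)"
    and C :: "'a set" and x0 :: 'a and L b \<theta> :: real
  defines "Ginv \<equiv> blinfun_inv (F' x0)"
  defines "lam \<equiv> sqrt (2 * b * L) / L"
  defines "tstar \<equiv> (1 - sqrt (1 - 2 * L * b)) / L"
  assumes contF: "continuous_on C F"
    and derF: "\<And>x. x \<in> interior C \<Longrightarrow> (F has_derivative blinfun_apply (F' x)) (at x)"
    and contF': "continuous_on (interior C) F'"
    and x0: "x0 \<in> interior C"
    and nonsing: "nonsingular (F' x0)"
    and L: "L > 0" and b: "b > 0" and bL: "b * L < 1/2"
    and ballC: "ball x0 (1/L) \<subseteq> C"
    and lip: "\<And>x y. x \<in> ball x0 (1/L) \<Longrightarrow> y \<in> ball x0 (1/L) \<Longrightarrow>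
               norm (Ginv o\<^sub>L (F' y - F' x)) \<le> L * norm (x - y)"
    and Fx0: "norm (Ginv (F x0)) \<le> b"
    and th0: "0 \<le> \<theta>"
    and th1: "\<theta> \<le> (1 - sqrt (2 * b * L)) / (1 + sqrt (2 * b * L))"
  shows
    "(\<forall>n (x :: nat \<Rightarrow> 'a). x 0 = x0 \<longrightarrow>
        (\<forall>k<n. norm (Ginv (F (x k) + F' (x k) (x (Suc k) - x k))) \<le> \<theta> * norm (Ginv (F (x k)))) \<longrightarrow>
        (\<exists>S. norm (Ginv (F (x n) + F' (x n) S)) \<le> \<theta> * norm (Ginv (F (x n)))))
   \<and> (\<forall>x :: nat \<Rightarrow> 'a. x 0 = x0 \<longrightarrow>
        (\<forall>k. norm (Ginv (F (x k) + F' (x k) (x (Suc k) - x k))) \<le> \<theta> * norm (Ginv (F (x k)))) \<longrightarrow>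
        (\<forall>k. norm (Ginv (F (x k))) \<le> ((1 + \<theta>\<^sup>2) / 2) ^ k * b)
      \<and> (\<forall>k. x k \<in> ball x0 lam)
      \<and> (\<exists>xs. x \<longlonglongrightarrow> xs \<and> xs \<in> cball x0 tstar \<and> F xs = 0
           \<and> (\<forall>y\<in>ball x0 (1/L). F y = 0 \<longrightarrow> y = xs)
           \<and> (\<forall>k. norm (xs - x (Suc k)) \<le>
                 ((1 + \<theta>) / 2 * (L / (1 - sqrt (2 * b * L))) * norm (xs - x k)
                  + \<theta> * (1 + sqrt (2 * b * L)) / (1 - sqrt (2 * b * L))) * norm (xs - x k))
           \<and> (\<theta> < (1 - sqrt (2 * b * L)) / (5 - sqrt (2 * b * L)) \<longrightarrow>
              (\<forall>k. norm (xs - x (Suc k)) \<le>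
                 ((1 + \<theta>) / 2 + 2 * \<theta> / (1 - sqrt (2 * b * L))) * norm (xs - x k)))))"
proof -
  let ?a = "sqrt (2 * b * L)"
  have Gex: "\<exists>G'. G' o\<^sub>L F' x0 = id_blinfun \<and> F' x0 o\<^sub>L G' = id_blinfun"
    using nonsing unfolding nonsingular_def .
  have Ginvp: "Ginv o\<^sub>L F' x0 = id_blinfun \<and> F' x0 o\<^sub>L Ginv = id_blinfun"
    unfolding Ginv_def blinfun_inv_def by (rule someI_ex[OF Gex])
  have inv2: "F' x0 (Ginv w) = w" for w
    using arg_cong[OF conjunct2[OF Ginvp], of "\<lambda>T. blinfun_apply T w"] by simp
  have bint: "ball x0 (1/L) \<subseteq> interior C" by (rule interior_maximal[OF ballC open_ball])
  have a0: "0 < ?a" using b L by simp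
  have "2 * b * L < 1" using bL by simp
  then have a1: "?a < 1" by (simp add: real_sqrt_lt_1_iff)
  have ab: "?a\<^sup>2 = 2 * b * L" using b L by simp
  have "\<theta> * (1 + ?a) \<le> 1 - ?a" using th1 a0 pos_le_divide_eq[of "1 + ?a" \<theta> "1 - ?a"] by simp
  then have tha: "(1 + \<theta>) * ?a \<le> 1 - \<theta>" by (simp add: algebra_simps)
  interpret N: nk2 F F' Ginv x0 L ?a b \<theta>
  proof
    show "0 < L" by (rule L)
    show "(F has_derivative blinfun_apply (F' x)) (at x)" if "x \<in> ball x0 (1/L)" for x
      using derF bint that by auto
    show "norm (Ginv o\<^sub>L (F' y - F' x)) \<le> L * norm (x - y)"
      if "x \<in> ball x0 (1/L)" "y \<in> ball x0 (1/L)" for x y using lip that by blast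
    show "Ginv o\<^sub>L F' x0 = id_blinfun" using Ginvp by blast
  qed (use a0 a1 ab th0 tha Fx0 in auto)
  have P1: "\<forall>n (x :: nat \<Rightarrow> 'a). x 0 = x0 \<longrightarrow>
        (\<forall>k<n. norm (Ginv (F (x k) + F' (x k) (x (Suc k) - x k))) \<le> \<theta> * norm (Ginv (F (x k)))) \<longrightarrow>
        (\<exists>S. norm (Ginv (F (x n) + F' (x n) S)) \<le> \<theta> * norm (Ginv (F (x n))))"
    using N.step_exists by blast
  have P2: "\<forall>x :: nat \<Rightarrow> 'a. x 0 = x0 \<longrightarrow>
        (\<forall>k. norm (Ginv (F (x k) + F' (x k) (x (Suc k) - x k))) \<le> \<theta> * norm (Ginv (F (x k)))) \<longrightarrow>
        (\<forall>k. norm (Ginv (F (x k))) \<le> ((1 + \<theta>\<^sup>2) / 2) ^ k * b)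
      \<and> (\<forall>k. x k \<in> ball x0 lam)
      \<and> (\<exists>xs. x \<longlonglongrightarrow> xs \<and> xs \<in> cball x0 tstar \<and> F xs = 0
           \<and> (\<forall>y\<in>ball x0 (1/L). F y = 0 \<longrightarrow> y = xs)
           \<and> (\<forall>k. norm (xs - x (Suc k)) \<le>
                 ((1 + \<theta>) / 2 * (L / (1 - sqrt (2 * b * L))) * norm (xs - x k)
                  + \<theta> * (1 + sqrt (2 * b * L)) / (1 - sqrt (2 * b * L))) * norm (xs - x k))
           \<and> (\<theta> < (1 - sqrt (2 * b * L)) / (5 - sqrt (2 * b * L)) \<longrightarrow>
              (\<forall>k. norm (xs - x (Suc k)) \<le>
                 ((1 + \<theta>) / 2 + 2 * \<theta> / (1 - sqrt (2 * b * L))) * norm (xs - x k))))"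
  proof (intro allI impI)
    fix x :: "nat \<Rightarrow> 'a"
    assume x0: "x 0 = x0"
      and res: "\<forall>k. norm (Ginv (F (x k) + F' (x k) (x (Suc k) - x k))) \<le> \<theta> * norm (Ginv (F (x k)))"
    have I: "N.Up x n < ?a \<and> 2 * L * norm (Ginv (F (x n))) \<le> (?a - N.Up x n)\<^sup>2
          \<and> norm (Ginv (F (x n))) \<le> ((1 + \<theta>\<^sup>2) / 2) ^ n * b" for n
      using N.inv[of x n, OF x0] res by blast
    have c1: "\<forall>k. norm (Ginv (F (x k))) \<le> ((1 + \<theta>\<^sup>2) / 2) ^ k * b" using I by blast
    have c2: "\<forall>k. x k \<in> ball x0 lam" unfolding lam_def using N.in_ball[of x, OF x0] I by blast
    obtain xs where lim: "x \<longlonglongrightarrow> xs" and tail: "\<And>k. L * norm (xs - x k) \<le> ?a - N.Up x k"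
      and Gxs: "Ginv (F xs) = 0"
      using N.conv[of x, OF x0 res] by blast
    have Fxs: "F xs = 0" using inv2[of "F xs"] Gxs by simp
    have "L * norm (xs - x0) \<le> ?a" using tail[of 0] x0 by (simp add: N.Up_def)
    then have "L * norm (xs - x0) < 1" using a1 by linarith
    then have "norm (xs - x0) < 1 / L" using L by (simp add: field_simps)
    then have xsb: "xs \<in> ball x0 (1/L)" by (simp add: dist_norm norm_minus_commute)
    have "L * norm (xs - x0) \<le> 1 - sqrt (1 - 2 * L * b)" by (rule N.zero_loc[OF xsb Gxs])
    then have xsc: "xs \<in> cball x0 tstar" unfolding tstar_def using L
      by (simp add: dist_norm norm_minus_commute field_simps)
    have un: "\<forall>y\<in>ball x0 (1/L). F y = 0 \<longrightarrow> y = xs"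
      using N.unique[OF _ _ xsb Gxs] by auto
    note R = N.rate[of x, OF x0 res tail Gxs]
    show "(\<forall>k. norm (Ginv (F (x k))) \<le> ((1 + \<theta>\<^sup>2) / 2) ^ k * b)
      \<and> (\<forall>k. x k \<in> ball x0 lam)
      \<and> (\<exists>xs. x \<longlonglongrightarrow> xs \<and> xs \<in> cball x0 tstar \<and> F xs = 0
           \<and> (\<forall>y\<in>ball x0 (1/L). F y = 0 \<longrightarrow> y = xs)
           \<and> (\<forall>k. norm (xs - x (Suc k)) \<le>
                 ((1 + \<theta>) / 2 * (L / (1 - sqrt (2 * b * L))) * norm (xs - x k)
                  + \<theta> * (1 + sqrt (2 * b * L)) / (1 - sqrt (2 * b * L))) * norm (xs - x k))
           \<and> (\<theta> < (1 - sqrt (2 * b * L)) / (5 - sqrt (2 * b * L)) \<longrightarrow>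
              (\<forall>k. norm (xs - x (Suc k)) \<le>
                 ((1 + \<theta>) / 2 + 2 * \<theta> / (1 - sqrt (2 * b * L))) * norm (xs - x k))))"
      using c1 c2 lim xsc Fxs un R by blast
  qed
  show ?thesis using P1 P2 by blast
qed

end
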